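(* If a spectrahedral cone $K\subseteq\mathbb{R}^n$ contains the positive orthant $\mathbb{R}_+^n$, then $K$ admits a normalized spectrahedral representation.
   Context: For real symmetric $k\times k$ matrices $C=\{C_i\}_{i\in[n]}$, $K_C=\{x\in\mathbb{R}^n:\sum_iC_ix_i\succeq0\}$; $C$ is a spectrahedral representation of $K_C$, and a cone of this form is spectrahedral. A representation $K=\{x:\sum_iC_ix_i\succeq0\}$ is normalized if $\sum_{i=1}^nC_i=\mathrm{Id}_k$ and $C_i\succeq0$ for all $i$ (the matrix size $k$ may differ from that of the original representation). *)

theory Defs
  imports "HOL-Analysis.Analysis"
begin

text \<open>A k x k real matrix is represented as a function nat => nat => real;
  only the entries with indices below k are relevant.\<close>

definition sym_mat :: "nat \<Rightarrow> (nat \<Rightarrow> nat \<Rightarrow> real) \<Rightarrow> bool" where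
  "sym_mat k A \<longleftrightarrow> (\<forall>i<k. \<forall>j<k. A i j = A j i)"

definition psd :: "nat \<Rightarrow> (nat \<Rightarrow> nat \<Rightarrow> real) \<Rightarrow> bool" where
  "psd k A \<longleftrightarrow> sym_mat k A \<and>
     (\<forall>v :: nat \<Rightarrow> real. 0 \<le> (\<Sum>i<k. \<Sum>j<k. v i * A i j * v j))"

definition pencil :: "('n::finite \<Rightarrow> nat \<Rightarrow> nat \<Rightarrow> real) \<Rightarrow> real^'n \<Rightarrow> nat \<Rightarrow> nat \<Rightarrow> real" where
  "pencil C x = (\<lambda>i j. \<Sum>l\<in>UNIV. x $ l * C l i j)"

definition spec_cone :: "nat \<Rightarrow> ('n::finite \<Rightarrow> nat \<Rightarrow> nat \<Rightarrow> real) \<Rightarrow> (real^'n) set" where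
  "spec_cone k C = {x. psd k (pencil C x)}"

definition spectrahedral_rep :: "(real^'n::finite) set \<Rightarrow> nat \<Rightarrow> ('n \<Rightarrow> nat \<Rightarrow> nat \<Rightarrow> real) \<Rightarrow> bool" where
  "spectrahedral_rep K k C \<longleftrightarrow> (\<forall>l. sym_mat k (C l)) \<and> K = spec_cone k C"

definition spectrahedral :: "(real^'n::finite) set \<Rightarrow> bool" where
  "spectrahedral K \<longleftrightarrow> (\<exists>k C. spectrahedral_rep K k C)"

definition normalized_rep :: "(real^'n::finite) set \<Rightarrow> nat \<Rightarrow> ('n \<Rightarrow> nat \<Rightarrow> nat \<Rightarrow> real) \<Rightarrow> bool" where
  "normalized_rep K k C \<longleftrightarrow> spectrahedral_rep K k C \<and>
     (\<forall>i<k. \<forall>j<k. (\<Sum>l\<in>UNIV. C l i j) = (if i = j then 1 else 0)) \<and>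
     (\<forall>l. psd k (C l))"

definition positive_orthant :: "(real^'n::finite) set" where
  "positive_orthant = {x. \<forall>l. 0 \<le> x $ l}"

end

theory Submission
  imports Defs
begin

definition bf :: "nat \<Rightarrow> (nat \<Rightarrow> nat \<Rightarrow> real) \<Rightarrow> (nat \<Rightarrow> real) \<Rightarrow> (nat \<Rightarrow> real) \<Rightarrow> real" where
  "bf k A u v = (\<Sum>i<k. \<Sum>j<k. u i * A i j * v j)"

lemma bf_add1: "bf k A (\<lambda>i. u i + w i) v = bf k A u v + bf k A w v"
  by (simp add: bf_def distrib_right sum.distrib)
lemma bf_add2: "bf k A v (\<lambda>i. u i + w i) = bf k A v u + bf k A v w"
  by (simp add: bf_def distrib_left sum.distrib)
lemma bf_diff1: "bf k A (\<lambda>i. u i - w i) v = bf k A u v - bf k A w v"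
  by (simp add: bf_def left_diff_distrib sum_subtractf)
lemma bf_diff2: "bf k A v (\<lambda>i. u i - w i) = bf k A v u - bf k A v w"
  by (simp add: bf_def right_diff_distrib sum_subtractf)
lemma bf_scale1: "bf k A (\<lambda>i. t * u i) v = t * bf k A u v"
  by (simp add: bf_def sum_distrib_left mult.assoc)
lemma bf_scale2: "bf k A v (\<lambda>i. t * u i) = t * bf k A v u"
  by (simp add: bf_def sum_distrib_left mult.assoc mult.left_commute)
lemma bf_div1: "bf k A (\<lambda>i. u i / t) v = bf k A u v / t"
  by (simp add: bf_def sum_divide_distrib)
lemma bf_div2: "bf k A v (\<lambda>i. u i / t) = bf k A v u / t"
  by (simp add: bf_def sum_divide_distrib)
lemma bf_sum1: "bf k A (\<lambda>i. \<Sum>a\<in>F. c a * p a i) v = (\<Sum>a\<in>F. c a * bf k A (p a) v)"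
  unfolding bf_def by (simp add: sum_distrib_left sum_distrib_right mult.assoc; subst sum.swap; simp add: sum.swap[of _ F])
lemma bf_sum2: "bf k A v (\<lambda>i. \<Sum>a\<in>F. c a * p a i) = (\<Sum>a\<in>F. c a * bf k A v (p a))"
  unfolding bf_def by (simp add: sum_distrib_left sum_distrib_right mult.assoc mult.left_commute; subst sum.swap; simp add: sum.swap[of _ F])
lemma bf_summat: "bf k (\<lambda>i j. \<Sum>l\<in>L. f l i j) u v = (\<Sum>l\<in>L. bf k (f l) u v)"
  unfolding bf_def by (simp add: sum_distrib_left sum_distrib_right mult.assoc mult.left_commute; subst sum.swap; simp add: sum.swap[of _ L])
lemma bf_pencil: "bf k (pencil C x) u v = (\<Sum>l\<in>UNIV. x $ l * bf k (C l) u v)"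
  unfolding bf_def pencil_def by (simp add: sum_distrib_left sum_distrib_right mult.assoc mult.left_commute; subst sum.swap; simp add: sum.swap[of _ UNIV])
lemma bf_sym: "sym_mat k A \<Longrightarrow> bf k A u v = bf k A v u"
  unfolding bf_def sym_mat_def
  by (subst sum.swap) (auto intro!: sum.cong simp: mult.commute mult.left_commute)
lemma psd_bf: "psd k A \<longleftrightarrow> sym_mat k A \<and> (\<forall>v. 0 \<le> bf k A v v)"
  by (simp add: psd_def bf_def)
lemma bf_cong2: "(\<And>j. j < k \<Longrightarrow> u j = w j) \<Longrightarrow> bf k A v u = bf k A v w"
  unfolding bf_def by simp
lemma psd_null:
  assumes "psd k A" "bf k A u u = 0"
  shows "bf k A y u = 0"
proof -
  have sym: "sym_mat k A" and nn: "\<And>v. 0 \<le> bf k A v v" using assms(1) by (auto simp: psd_bf)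
  define b where "b = bf k A y u"
  define q where "q = bf k A y y"
  have q0: "q \<ge> 0" using nn q_def by simp
  have exp: "bf k A (\<lambda>i. u i + t * y i) (\<lambda>i. u i + t * y i) = 2 * t * b + t^2 * q" for t
    using bf_sym[OF sym, of u y] assms(2)
    by (simp add: bf_add1 bf_add2 bf_scale1 bf_scale2 b_def q_def power2_eq_square algebra_simps)
  define t where "t = - b / (q + 1)"
  have tq: "t * (q + 1) = - b" using q0 by (simp add: t_def)
  have "0 \<le> 2 * t * b + t^2 * q" using nn exp by metis
  hence "0 \<le> (q+1)^2 * (2 * t * b + t^2 * q)" by simp
  also have "(q+1)^2 * (2 * t * b + t^2 * q) = b^2 * (- q - 2)"
    using tq by algebra
  finally have "b^2 * (- q - 2) \<ge> 0" .
  hence "b^2 \<le> 0" using q0 by (smt (verit) mult_pos_neg zero_le_power2)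
  thus ?thesis unfolding b_def by simp
qed

definition ev :: "nat \<Rightarrow> nat \<Rightarrow> real" where "ev i = (\<lambda>j. if j = i then 1 else 0)"

lemma gram_schmidt:
  assumes "psd k S"
  shows "\<exists>(r::nat) p. (\<forall>a<r. \<forall>b<r. bf k S (p a) (p b) = (if a = b then 1 else 0)) \<and>
     (\<forall>i<m. \<exists>c. \<forall>y. bf k S y (\<lambda>j. ev i j - (\<Sum>a<r. c a * p a j)) = 0)"
proof (induction m)
  case 0
  show ?case by (rule exI[where x="0::nat"]) simp
next
  case (Suc m)
  then obtain r :: nat and p where orth: "\<forall>a<r. \<forall>b<r. bf k S (p a) (p b) = (if a = b then 1 else 0)"
    and dec: "\<forall>i<m. \<exists>c. \<forall>y. bf k S y (\<lambda>j. ev i j - (\<Sum>a<r. c a * p a j)) = 0" by blast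
  have sym: "sym_mat k S" and nn: "\<And>v. 0 \<le> bf k S v v" using assms by (auto simp: psd_bf)
  define d where "d a = bf k S (p a) (ev m)" for a
  define w where "w = (\<lambda>j. ev m j - (\<Sum>a<r. d a * p a j))"
  have wperp: "bf k S (p b) w = 0" if "b < r" for b
  proof -
    have "bf k S (p b) w = d b - (\<Sum>a<r. d a * bf k S (p b) (p a))"
      unfolding w_def by (simp add: bf_diff2 bf_sum2 d_def)
    also have "(\<Sum>a<r. d a * bf k S (p b) (p a)) = (\<Sum>a<r. if a = b then d a else 0)"
      using orth that by (intro sum.cong) auto
    also have "\<dots> = d b" using that by simp
    finally show ?thesis by simp
  qed
  define q where "q = bf k S w w"
  show ?case
  proof (cases "q = 0")
    case True
    show ?thesis
    proof (intro exI conjI)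
      show "\<forall>a<r. \<forall>b<r. bf k S (p a) (p b) = (if a = b then 1 else 0)" by (rule orth)
      show "\<forall>i<Suc m. \<exists>c. \<forall>y. bf k S y (\<lambda>j. ev i j - (\<Sum>a<r. c a * p a j)) = 0"
      proof (intro allI impI)
        fix i assume "i < Suc m"
        show "\<exists>c. \<forall>y. bf k S y (\<lambda>j. ev i j - (\<Sum>a<r. c a * p a j)) = 0"
        proof (cases "i < m")
          case True then show ?thesis using dec by blast
        next
          case False
          hence "i = m" using \<open>i < Suc m\<close> by simp
          then show ?thesis using psd_null[OF assms] True unfolding q_def w_def by blast
        qed
      qed
    qed
  next
    case False
    have qpos: "q > 0" using nn[of w] False q_def by simp
    define p' where "p' = p(r := (\<lambda>j. w j / sqrt q))"
    have p'r: "p' r = (\<lambda>j. (1 / sqrt q) * w j)" by (simp add: p'_def)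
    have p'a: "a < r \<Longrightarrow> p' a = p a" for a by (simp add: p'_def)
    have sumr: "(\<Sum>a<Suc r. c a * p' a j) = (\<Sum>a<r. c a * p a j) + c r * w j / sqrt q" for c j
      by (simp add: p'a p'_def)
    have sumr0: "(\<Sum>a<r. c a * p' a j) = (\<Sum>a<r. c a * p a j)" for c j
      by (intro sum.cong) (auto simp: p'a)
    show ?thesis
    proof (intro exI conjI)
      show "\<forall>a<Suc r. \<forall>b<Suc r. bf k S (p' a) (p' b) = (if a = b then 1 else 0)"
      proof (intro allI impI)
        fix a b assume a: "a < Suc r" and b: "b < Suc r"
        have wp: "bf k S w (p b) = 0" if "b < r" for b using wperp[OF that] bf_sym[OF sym] by metis
        show "bf k S (p' a) (p' b) = (if a = b then 1 else 0)"
          using a b orth qpos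
          by (cases "a = r"; cases "b = r")
             (auto simp: p'_def bf_div1 bf_div2 wperp wp q_def[symmetric] less_Suc_eq)
      qed
      show "\<forall>i<Suc m. \<exists>c. \<forall>y. bf k S y (\<lambda>j. ev i j - (\<Sum>a<Suc r. c a * p' a j)) = 0"
      proof (intro allI impI)
        fix i assume "i < Suc m"
        show "\<exists>c. \<forall>y. bf k S y (\<lambda>j. ev i j - (\<Sum>a<Suc r. c a * p' a j)) = 0"
        proof (cases "i < m")
          case True
          then obtain c where "\<forall>y. bf k S y (\<lambda>j. ev i j - (\<Sum>a<r. c a * p a j)) = 0" using dec by blast
          then show ?thesis by (intro exI[of _ "c(r := 0)"]) (simp add: sumr sumr0)
        next
          case False
          hence "i = m" using \<open>i < Suc m\<close> by simp
          have "(\<lambda>j. ev i j - (\<Sum>a<Suc r. (d(r := sqrt q)) a * p' a j)) = (\<lambda>j. 0)"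
            using qpos \<open>i = m\<close> by (simp add: sumr0 p'_def w_def)
          then show ?thesis by (intro exI[of _ "d(r := sqrt q)"]) (simp add: bf_def)
        qed
      qed
    qed
  qed
qed

lemma decomp:
  assumes "psd k S"
  shows "\<exists>(r::nat) p. (\<forall>a<r. \<forall>b<r. bf k S (p a) (p b) = (if a = b then 1 else 0)) \<and>
     (\<forall>v. \<exists>c. \<forall>y. bf k S y (\<lambda>j. v j - (\<Sum>a<r. c a * p a j)) = 0)"
proof -
  obtain r :: nat and p where orth: "\<forall>a<r. \<forall>b<r. bf k S (p a) (p b) = (if a = b then 1 else 0)"
    and dec: "\<forall>i<k. \<exists>c. \<forall>y. bf k S y (\<lambda>j. ev i j - (\<Sum>a<r. c a * p a j)) = 0"
    using gram_schmidt[OF assms, of k] by blast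
  from dec have "\<forall>i\<in>{..<k}. \<exists>c. \<forall>y. bf k S y (\<lambda>j. ev i j - (\<Sum>a<r. c a * p a j)) = 0" by simp
  then obtain cc where cc: "\<And>i y. i < k \<Longrightarrow> bf k S y (\<lambda>j. ev i j - (\<Sum>a<r. cc i a * p a j)) = 0"
    using bchoice[of "{..<k}"] by (metis lessThan_iff)
  have "\<exists>c. \<forall>y. bf k S y (\<lambda>j. v j - (\<Sum>a<r. c a * p a j)) = 0" for v
  proof (intro exI allI)
    fix y
    define c where "c a = (\<Sum>i<k. v i * cc i a)" for a
    have eq: "v j - (\<Sum>a<r. c a * p a j) = (\<Sum>i<k. v i * (ev i j - (\<Sum>a<r. cc i a * p a j)))"
      if "j < k" for j
    proof -
      have "(\<Sum>i<k. v i * ev i j) = (\<Sum>i<k. if i = j then v i else 0)"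
        by (intro sum.cong) (auto simp: ev_def)
      hence "(\<Sum>i<k. v i * ev i j) = v j" using that by simp
      moreover have "(\<Sum>a<r. c a * p a j) = (\<Sum>i<k. v i * (\<Sum>a<r. cc i a * p a j))"
        unfolding c_def by (simp add: sum_distrib_left sum_distrib_right mult.assoc; subst sum.swap; simp)
      ultimately show ?thesis by (simp add: right_diff_distrib sum_subtractf)
    qed
    have "bf k S y (\<lambda>j. v j - (\<Sum>a<r. c a * p a j)) =
          bf k S y (\<lambda>j. \<Sum>i<k. v i * (ev i j - (\<Sum>a<r. cc i a * p a j)))"
      by (rule bf_cong2) (simp add: eq)
    also have "\<dots> = (\<Sum>i<k. v i * bf k S y (\<lambda>j. ev i j - (\<Sum>a<r. cc i a * p a j)))"
      by (rule bf_sum2)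
    also have "\<dots> = 0" by (simp add: cc)
    finally show "bf k S y (\<lambda>j. v j - (\<Sum>a<r. c a * p a j)) = 0" .
  qed
  with orth show ?thesis by blast
qed

lemma quad_comb:
  "(\<Sum>a<r. \<Sum>b<r. w a * bf k M (p a) (p b) * w b) = bf k M (\<lambda>j. \<Sum>a<r. w a * p a j) (\<lambda>j. \<Sum>a<r. w a * p a j)"
  by (simp add: bf_sum1 bf_sum2 sum_distrib_left mult.commute mult.left_commute)

lemma pencil_sym: "(\<forall>l. sym_mat k (C l)) \<Longrightarrow> sym_mat k (pencil C x)"
  by (simp add: sym_mat_def pencil_def)

theorem lemma12:
  fixes K :: "(real^'n::finite) set"
  assumes "spectrahedral K"
    and "positive_orthant \<subseteq> K"
  shows "\<exists>k C. normalized_rep K k C"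
proof -
  obtain k C where symC: "\<And>l. sym_mat k (C l)" and Kdef: "K = spec_cone k C"
    using assms(1) by (auto simp: spectrahedral_def spectrahedral_rep_def)
  have psdC: "psd k (C l)" for l
  proof -
    have "axis l 1 \<in> positive_orthant" by (simp add: positive_orthant_def axis_def)
    hence "axis l 1 \<in> spec_cone k C" using assms(2) Kdef by blast
    moreover have "pencil C (axis l 1) = C l"
    proof (intro ext)
      fix i j
      have "(\<Sum>la\<in>UNIV. axis l 1 $ la * C la i j) = (\<Sum>la\<in>UNIV. if la = l then C la i j else 0)"
        by (intro sum.cong) (auto simp: axis_def)
      thus "pencil C (axis l 1) i j = C l i j" by (simp add: pencil_def)
    qed
    ultimately show ?thesis by (simp add: spec_cone_def)
  qed
  define S where "S = (\<lambda>i j. \<Sum>l\<in>UNIV. C l i j)"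
  have bfS: "bf k S u v = (\<Sum>l\<in>UNIV. bf k (C l) u v)" for u v
    unfolding S_def by (rule bf_summat)
  have psdS: "psd k S"
    unfolding psd_bf
  proof
    show "sym_mat k S" using symC by (simp add: S_def sym_mat_def)
    show "\<forall>v. 0 \<le> bf k S v v" using psdC by (simp add: bfS psd_bf sum_nonneg)
  qed
  obtain r :: nat and p where orth: "\<forall>a<r. \<forall>b<r. bf k S (p a) (p b) = (if a = b then 1 else 0)"
    and dec: "\<forall>v. \<exists>c. \<forall>y. bf k S y (\<lambda>j. v j - (\<Sum>a<r. c a * p a j)) = 0"
    using decomp[OF psdS] by blast
  have null: "bf k (C l) y u = 0" if "\<forall>y. bf k S y u = 0" for l y u
  proof -
    have "(\<Sum>l\<in>UNIV. bf k (C l) u u) = 0" using that bfS by metis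
    hence "bf k (C l) u u = 0"
      using psdC by (subst (asm) sum_nonneg_eq_0_iff) (auto simp: psd_bf)
    thus ?thesis using psd_null[OF psdC] by blast
  qed
  define D where "D l a b = bf k (C l) (p a) (p b)" for l a b
  have penD: "pencil D x = (\<lambda>a b. bf k (pencil C x) (p a) (p b))" for x
    by (simp add: bf_pencil) (simp add: pencil_def D_def)
  have key: "psd k (pencil C x) \<longleftrightarrow> psd r (pencil D x)" for x
  proof -
    define M where "M = pencil C x"
    have symM: "sym_mat k M" using symC pencil_sym M_def by blast
    have symD: "sym_mat r (pencil D x)"
      using bf_sym[OF symM] by (simp add: penD M_def[symmetric] sym_mat_def)
    show ?thesis
    proof
      assume "psd k (pencil C x)"
      then have "0 \<le> bf k M w w" for w by (simp add: psd_bf M_def)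
      then show "psd r (pencil D x)"
        using symD by (simp add: psd_def penD M_def[symmetric] quad_comb)
    next
      assume h: "psd r (pencil D x)"
      have "0 \<le> bf k M v v" for v
      proof -
        obtain c where c: "\<forall>y. bf k S y (\<lambda>j. v j - (\<Sum>a<r. c a * p a j)) = 0" using dec by blast
        define Pc where "Pc = (\<lambda>j. \<Sum>a<r. c a * p a j)"
        define u where "u = (\<lambda>j. v j - Pc j)"
        have u0: "bf k M y u = 0" for y
          using null[OF c] by (simp add: M_def bf_pencil u_def Pc_def)
        have u0': "bf k M u y = 0" for y using u0 bf_sym[OF symM] by metis
        have v: "v = (\<lambda>j. Pc j + u j)" by (simp add: u_def)
        have "bf k M v v = bf k M Pc Pc"
          by (subst (1 2) v) (simp add: bf_add1 bf_add2 u0 u0')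
        also have "\<dots> = (\<Sum>a<r. \<Sum>b<r. c a * pencil D x a b * c b)"
          by (simp add: penD M_def[symmetric] quad_comb Pc_def)
        also have "\<dots> \<ge> 0" using h by (simp add: psd_def)
        finally show ?thesis .
      qed
      then show "psd k (pencil C x)" using symM by (simp add: psd_bf M_def)
    qed
  qed
  have "normalized_rep K r D"
    unfolding normalized_rep_def spectrahedral_rep_def
  proof (intro conjI)
    show "\<forall>l. sym_mat r (D l)" using bf_sym[OF symC] by (simp add: sym_mat_def D_def)
    show "K = spec_cone r D" using key by (auto simp: Kdef spec_cone_def)
    show "\<forall>i<r. \<forall>j<r. (\<Sum>l\<in>UNIV. D l i j) = (if i = j then 1 else 0)"
      using orth by (simp add: D_def bfS[symmetric])
    show "\<forall>l. psd r (D l)"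
    proof
      fix l
      have "sym_mat r (D l)" using bf_sym[OF symC] by (simp add: sym_mat_def D_def)
      moreover have "0 \<le> (\<Sum>a<r. \<Sum>b<r. w a * D l a b * w b)" for w
        using psdC[of l] by (simp add: D_def quad_comb psd_bf)
      ultimately show "psd r (D l)" by (simp add: psd_def)
    qed
  qed
  then show ?thesis by blast
qed
end
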